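(* Fix one of the two variants $\sharp\in\{\text{lumped},\text{exact}\}$ described in the context, let $\vec X^m\in\underline V^h_{\partial_0}$ satisfy assumption $(\mathfrak A)$, and let $\Delta t_m>0$. (i) If $(\delta\vec X^{m+1},\kappa^{m+1})\in\underline V^h_\partial\times W_\sharp$ satisfies, with $\vec X^{m+1}=\vec X^m+\delta\vec X^{m+1}$, $$\Big(\vec X^m\cdot\vec e_1\,\tfrac{\vec X^{m+1}-\vec X^m}{\Delta t_m},\chi\,\vec\nu^m|\vec X^m_\rho|\Big)_\sharp=\Big(\vec X^m\cdot\vec e_1\,\kappa^{m+1},\chi|\vec X^m_\rho|\Big)_\sharp\quad\forall\chi\in W_\sharp,$$ $$\Big(\vec X^m\cdot\vec e_1\,\kappa^{m+1}\vec\nu^m,\vec\eta\,|\vec X^m_\rho|\Big)_\sharp+\big(\vec\eta\cdot\vec e_1,|\vec X^{m+1}_\rho|\big)+\Big((\vec X^m\cdot\vec e_1)\vec X^{m+1}_\rho,\vec\eta_\rho|\vec X^m_\rho|^{-1}\Big)=B^m(\vec\eta)\quad\forall\vec\eta\in\underline V^h_\partial,$$ then $E(\vec X^{m+1})+2\pi\Delta t_m\big(\vec X^m\cdot\vec e_1\,|\kappa^{m+1}|^2,|\vec X^m_\rho|\big)_\sharp\le E(\vec X^m)$. (ii) If $(\delta\vec X^{m+1},\vec\kappa^{m+1})\in\underline V^h_\partial\times[W_\sharp]^2$ satisfies, with $\vec X^{m+1}=\vec X^m+\delta\vec X^{m+1}$, $$\Big(\vec X^m\cdot\vec e_1\,\tfrac{\vec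 X^{m+1}-\vec X^m}{\Delta t_m},\vec\chi\,|\vec X^m_\rho|\Big)_\sharp=\Big((\vec X^m\cdot\vec e_1)\vec\kappa^{m+1},\vec\chi|\vec X^m_\rho|\Big)_\sharp\quad\forall\vec\chi\in[W_\sharp]^2,$$ $$\Big((\vec X^m\cdot\vec e_1)\vec\kappa^{m+1},\vec\eta\,|\vec X^m_\rho|\Big)_\sharp+\big(\vec\eta\cdot\vec e_1,|\vec X^{m+1}_\rho|\big)+\Big((\vec X^m\cdot\vec e_1)\vec X^{m+1}_\rho,\vec\eta_\rho|\vec X^m_\rho|^{-1}\Big)=B^m(\vec\eta)\quad\forall\vec\eta\in\underline V^h_\partial,$$ then $E(\vec X^{m+1})+2\pi\Delta t_m\big(\vec X^m\cdot\vec e_1\,|\vec\kappa^{m+1}|^2,|\vec X^m_\rho|\big)_\sharp\le E(\vec X^m)$.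
   Context: Setup. $\vec e_1=(1,0)^T$, $\vec e_2=(0,1)^T$; "$\cdot$" is the Euclidean inner product; $[r]_+=\max\{r,0\}$, $[r]_-=-\max\{-r,0\}$. $I$ is either the periodic interval $\mathbb R/\mathbb Z$ (with $\partial I=\emptyset$) or $I=(0,1)$ (with $\partial I=\{0,1\}$). $\partial I=\partial_DI\cup\partial_0I\cup\partial_1I\cup\partial_2I$ is a given disjoint partition, and $\widehat\varrho^{(p)}\in\mathbb R$, $p\in\{0,1\}$, are given constants with $|\widehat\varrho^{(p)}|\le1$. Let $J\ge3$, $h=1/J$, $q_j=jh$ ($j=0,\dots,J$; $q_0=q_J$ identified in the periodic case). $V^h$ is the space of continuous functions on $\overline I$ (periodic if $I=\mathbb R/\mathbb Z$) that are affine on each $[q_{j-1},q_j]$; $\underline V^h=[V^h]^2$; $\underline V^h_{\partial_0}=\{\vec\eta\in\underline V^h:\vec\eta(\rho)\cdot\vec e_1=0\ \forall\rho\in\partial_0I\}$; $\underline V^h_\partial=\{\vec\eta\in\underline V^h_{\partial_0}:\vec\eta(\rho)\cdot\vec e_i=0\ \forall\rho\in\partial_iI,\ i=1,2;\ \vec\eta(\rho)=\vec0\ \forall\rho\in\partial_DI\}$; $W^h_{\partial_0}=\{\chi\in V^h:\chi(\rho)=0\ \forall\rho\in\partial_0I\}$. $(\cdot,\cdot)$ is the $L^2(I)$ inner product (with dot product for vector functions), and for piecewise continuous $f,g$ the mass-lumped product is $(f,g)^h=\tfrac h2\sum_{j=1}^J[(fg)(q_j^-)+(fg)(q_{j-1}^+)]$.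 Two variants: in the "lumped" variant $(\cdot,\cdot)_\sharp=(\cdot,\cdot)^h$ and $W_\sharp=W^h_{\partial_0}$; in the "exact" variant $(\cdot,\cdot)_\sharp=(\cdot,\cdot)$ and $W_\sharp=V^h$. For $\vec X^m$ with $|\vec X^m_\rho|>0$ a.e., $\vec\nu^m=-[\vec X^m_\rho]^\perp/|\vec X^m_\rho|$ with $(a,b)^\perp=(b,-a)$. Assumption $(\mathfrak A)$: $|\vec X^m_\rho|>0$ a.e. on $I$ and $\vec X^m(\rho)\cdot\vec e_1>0$ for all $\rho\in\overline I\setminus\partial_0I$. The boundary functional is $B^m(\vec\eta)=-\sum_{p\in\partial_1I}\widehat\varrho^{(p)}(\vec X^m(p)\cdot\vec e_1)\vec\eta(p)\cdot\vec e_2-\sum_{p\in\partial_2I}\big(([\widehat\varrho^{(p)}]_+\vec X^{m+1}(p)+[\widehat\varrho^{(p)}]_-\vec X^m(p))\cdot\vec e_1\big)\vec\eta(p)\cdot\vec e_1$. The discrete energy of $\vec X\in\underline V^h$ is $E(\vec X)=2\pi(\vec X\cdot\vec e_1,|\vec X_\rho|)+2\pi\sum_{p\in\partial_1I}\widehat\varrho^{(p)}(\vec X(p)\cdot\vec e_1)(\vec X(p)\cdot\vec e_2)+\pi\sum_{p\in\partial_2I}\widehat\varrho^{(p)}(\vec X(p)\cdot\vec e_1)^2$. *)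

theory Defs
  imports "HOL-Analysis.Analysis"
begin

text \<open>Boundary condition types for the points of the boundary of I.
  BD = Dirichlet (part of partial_D I), B0 = partial_0 I, B1 = partial_1 I, B2 = partial_2 I.\<close>
datatype bctype = BD | B0 | B1 | B2

abbreviation e1 :: "real \<times> real" where "e1 \<equiv> (1, 0)"
abbreviation e2 :: "real \<times> real" where "e2 \<equiv> (0, 1)"

definition node :: "nat \<Rightarrow> nat \<Rightarrow> real" where
  "node J j = real j / real J"

text \<open>per = True: I is the periodic interval R/Z (boundary empty);
  per = False: I = (0,1) with boundary {0,1}.\<close>
definition bdry :: "bool \<Rightarrow> real set" where
  "bdry per = (if per then {} else {0, 1})"

definition bpart :: "bool \<Rightarrow> (real \<Rightarrow> bctype) \<Rightarrow> bctype \<Rightarrow> real set" where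
  "bpart per bc t = {p \<in> bdry per. bc p = t}"

text \<open>Continuous piecewise affine functions on [0,1] (periodic if per).
  At type real this is V^h, at type real*real it is [V^h]^2.\<close>
definition Vh :: "nat \<Rightarrow> bool \<Rightarrow> (real \<Rightarrow> 'a::real_normed_vector) set" where
  "Vh J per = {f. continuous_on {0..1} f
     \<and> (\<forall>j\<in>{1..J}. \<exists>a b. \<forall>\<rho>\<in>{node J (j - 1)..node J j}. f \<rho> = a + \<rho> *\<^sub>R b)
     \<and> (per \<longrightarrow> f 0 = f 1)}"

definition VVh0 :: "nat \<Rightarrow> bool \<Rightarrow> (real \<Rightarrow> bctype) \<Rightarrow> (real \<Rightarrow> real \<times> real) set" where
  "VVh0 J per bc = {\<eta> \<in> Vh J per. \<forall>\<rho>\<in>bpart per bc B0. \<eta> \<rho> \<bullet> e1 = 0}"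

definition VVhd :: "nat \<Rightarrow> bool \<Rightarrow> (real \<Rightarrow> bctype) \<Rightarrow> (real \<Rightarrow> real \<times> real) set" where
  "VVhd J per bc = {\<eta> \<in> VVh0 J per bc.
      (\<forall>\<rho>\<in>bpart per bc B1. \<eta> \<rho> \<bullet> e1 = 0)
    \<and> (\<forall>\<rho>\<in>bpart per bc B2. \<eta> \<rho> \<bullet> e2 = 0)
    \<and> (\<forall>\<rho>\<in>bpart per bc BD. \<eta> \<rho> = 0)}"

definition Wh0 :: "nat \<Rightarrow> bool \<Rightarrow> (real \<Rightarrow> bctype) \<Rightarrow> (real \<Rightarrow> real) set" where
  "Wh0 J per bc = {ch \<in> Vh J per. \<forall>\<rho>\<in>bpart per bc B0. ch \<rho> = 0}"

definition dr :: "(real \<Rightarrow> 'a::real_normed_vector) \<Rightarrow> real \<Rightarrow> 'a" where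
  "dr X \<rho> = vector_derivative X (at \<rho>)"

definition L2ip :: "(real \<Rightarrow> 'a::real_inner) \<Rightarrow> (real \<Rightarrow> 'a) \<Rightarrow> real" where
  "L2ip f g = integral {0..1} (\<lambda>\<rho>. f \<rho> \<bullet> g \<rho>)"

definition lumpip :: "nat \<Rightarrow> (real \<Rightarrow> 'a::real_inner) \<Rightarrow> (real \<Rightarrow> 'a) \<Rightarrow> real" where
  "lumpip J f g = (1 / real J) / 2 * (\<Sum>j = 1..J.
      Lim (at_left (node J j)) (\<lambda>\<rho>. f \<rho> \<bullet> g \<rho>)
    + Lim (at_right (node J (j - 1))) (\<lambda>\<rho>. f \<rho> \<bullet> g \<rho>))"

text \<open>The two variants: lumped = True gives ((.,.)^h, W^h_{partial_0}),
  lumped = False gives ((.,.), V^h).\<close>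
definition sip :: "bool \<Rightarrow> nat \<Rightarrow> (real \<Rightarrow> 'a::real_inner) \<Rightarrow> (real \<Rightarrow> 'a) \<Rightarrow> real" where
  "sip lumped J f g = (if lumped then lumpip J f g else L2ip f g)"

definition Wsh :: "bool \<Rightarrow> nat \<Rightarrow> bool \<Rightarrow> (real \<Rightarrow> bctype) \<Rightarrow> (real \<Rightarrow> real) set" where
  "Wsh lumped J per bc = (if lumped then Wh0 J per bc else Vh J per)"

definition W2 :: "(real \<Rightarrow> real) set \<Rightarrow> (real \<Rightarrow> real \<times> real) set" where
  "W2 W = {\<kappa>. (\<lambda>\<rho>. fst (\<kappa> \<rho>)) \<in> W \<and> (\<lambda>\<rho>. snd (\<kappa> \<rho>)) \<in> W}"

definition perp :: "real \<times> real \<Rightarrow> real \<times> real" where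
  "perp v = (snd v, - fst v)"

definition nu :: "(real \<Rightarrow> real \<times> real) \<Rightarrow> real \<Rightarrow> real \<times> real" where
  "nu X \<rho> = - ((1 / norm (dr X \<rho>)) *\<^sub>R perp (dr X \<rho>))"

definition posp :: "real \<Rightarrow> real" where "posp r = max r 0"
definition negp :: "real \<Rightarrow> real" where "negp r = - max (- r) 0"

definition Bm :: "bool \<Rightarrow> (real \<Rightarrow> bctype) \<Rightarrow> (real \<Rightarrow> real)
    \<Rightarrow> (real \<Rightarrow> real \<times> real) \<Rightarrow> (real \<Rightarrow> real \<times> real) \<Rightarrow> (real \<Rightarrow> real \<times> real) \<Rightarrow> real" where
  "Bm per bc rho Xm Xm1 \<eta> =
     - (\<Sum>p\<in>bpart per bc B1. rho p * (Xm p \<bullet> e1) * (\<eta> p \<bullet> e2))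
     - (\<Sum>p\<in>bpart per bc B2.
          ((posp (rho p) *\<^sub>R Xm1 p + negp (rho p) *\<^sub>R Xm p) \<bullet> e1) * (\<eta> p \<bullet> e1))"

definition Energy :: "bool \<Rightarrow> (real \<Rightarrow> bctype) \<Rightarrow> (real \<Rightarrow> real) \<Rightarrow> (real \<Rightarrow> real \<times> real) \<Rightarrow> real" where
  "Energy per bc rho X =
     2 * pi * L2ip (\<lambda>\<rho>. X \<rho> \<bullet> e1) (\<lambda>\<rho>. norm (dr X \<rho>))
   + 2 * pi * (\<Sum>p\<in>bpart per bc B1. rho p * (X p \<bullet> e1) * (X p \<bullet> e2))
   + pi * (\<Sum>p\<in>bpart per bc B2. rho p * (X p \<bullet> e1)\<^sup>2)"

definition AssumpA :: "bool \<Rightarrow> (real \<Rightarrow> bctype) \<Rightarrow> (real \<Rightarrow> real \<times> real) \<Rightarrow> bool" where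
  "AssumpA per bc X \<longleftrightarrow>
     (AE \<rho> in lebesgue_on {0..1}. 0 < norm (dr X \<rho>))
   \<and> (\<forall>\<rho>\<in>{0..1} - bpart per bc B0. 0 < X \<rho> \<bullet> e1)"

end

theory Submission imports Defs begin

lemma node_0[simp]: "node J 0 = 0" by (simp add: node_def)
lemma node_J[simp]: "J > 0 \<Longrightarrow> node J J = 1" by (simp add: node_def)
lemma node_mono: "J > 0 \<Longrightarrow> i \<le> j \<Longrightarrow> node J i \<le> node J j"
  by (simp add: node_def divide_right_mono)
lemma node_less: "J > 0 \<Longrightarrow> i < j \<Longrightarrow> node J i < node J j"
  by (simp add: node_def divide_strict_right_mono)
lemma node_le1: "J > 0 \<Longrightarrow> j \<le> J \<Longrightarrow> node J j \<le> 1"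
  using node_mono[of J j J] by simp
lemma node_ge0: "0 \<le> node J j" by (simp add: node_def)

lemma in_some_interval:
  assumes "J > 0" "\<rho> \<in> {0..1}" "\<rho> \<notin> node J ` {0..J}"
  shows "\<exists>j\<in>{1..J}. \<rho> \<in> {node J (j - 1)<..<node J j}"
proof -
  define k where "k = nat \<lfloor>\<rho> * J\<rfloor>"
  have r0: "0 \<le> \<rho> * J" using assms by simp
  have k1: "real k \<le> \<rho> * J" using r0 unfolding k_def by linarith
  have k2: "\<rho> * J < real k + 1" using r0 unfolding k_def by linarith
  have rJ: "\<rho> * J \<le> J" using assms by (simp add: mult_left_le_one_le)
  have kJ: "k \<le> J" using rJ k1 by linarith
  have "\<rho> \<noteq> node J k" using assms(3) kJ by auto
  hence "real k \<noteq> \<rho> * J" using assms(1) by (auto simp: node_def field_simps)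
  hence k3: "real k < \<rho> * J" using k1 by linarith
  hence "k < J" using rJ by linarith
  show ?thesis
  proof (rule bexI[of _ "k+1"])
    show "\<rho> \<in> {node J (k + 1 - 1)<..<node J (k + 1)}"
      using k3 k2 assms(1) by (auto simp: node_def field_simps)
    show "k + 1 \<in> {1..J}" using `k < J` by simp
  qed
qed

definition pc :: "nat \<Rightarrow> (real \<Rightarrow> 'a::topological_space) \<Rightarrow> bool" where
  "pc J f \<longleftrightarrow> (\<forall>j\<in>{1..J}. \<exists>g. continuous_on {node J (j - 1)..node J j} g
      \<and> (\<forall>\<rho>\<in>{node J (j - 1)<..<node J j}. f \<rho> = g \<rho>))"

lemma pc_op2:
  assumes "pc J f" "pc J g"
    and F: "\<And>(S::real set) a b. continuous_on S a \<Longrightarrow> continuous_on S b \<Longrightarrow> continuous_on S (\<lambda>x. F (a x) (b x))"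
  shows "pc J (\<lambda>\<rho>. F (f \<rho>) (g \<rho>))"
  unfolding pc_def
proof
  fix j assume j: "j \<in> {1..J}"
  obtain a where a: "continuous_on {node J (j - 1)..node J j} a" "\<forall>\<rho>\<in>{node J (j - 1)<..<node J j}. f \<rho> = a \<rho>"
    using assms(1) j unfolding pc_def by blast
  obtain b where b: "continuous_on {node J (j - 1)..node J j} b" "\<forall>\<rho>\<in>{node J (j - 1)<..<node J j}. g \<rho> = b \<rho>"
    using assms(2) j unfolding pc_def by blast
  show "\<exists>h. continuous_on {node J (j - 1)..node J j} h \<and> (\<forall>\<rho>\<in>{node J (j - 1)<..<node J j}. F (f \<rho>) (g \<rho>) = h \<rho>)"
    using F[OF a(1) b(1)] a(2) b(2) by (intro exI[of _ "\<lambda>x. F (a x) (b x)"]) auto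
qed

lemma pc_op1:
  assumes "pc J f"
    and F: "\<And>(S::real set) a. continuous_on S a \<Longrightarrow> continuous_on S (\<lambda>x. F (a x))"
  shows "pc J (\<lambda>\<rho>. F (f \<rho>))"
  by (rule pc_op2[OF assms(1) assms(1), of "\<lambda>x y. F x"]) (erule F)

lemma pc_const: "pc J (\<lambda>_. c)"
  unfolding pc_def by (auto intro!: exI[of _ "\<lambda>_. c"])

lemma Vh_pc: assumes "f \<in> Vh J per" "J > 0" shows "pc J f"
  unfolding pc_def
proof
  fix j assume j: "j \<in> {1..J}"
  have "{node J (j - 1)..node J j} \<subseteq> {0..1}" using j assms(2) node_le1[of J j] node_ge0[of J "j-1"] by auto
  moreover have "continuous_on {0..1} f" using assms(1) by (simp add: Vh_def)
  ultimately have "continuous_on {node J (j - 1)..node J j} f" 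
    using continuous_on_subset by metis
  thus "\<exists>g. continuous_on {node J (j - 1)..node J j} g \<and> (\<forall>\<rho>\<in>{node J (j - 1)<..<node J j}. f \<rho> = g \<rho>)"
    by blast
qed

definition pwd :: "nat \<Rightarrow> (real \<Rightarrow> 'a::real_normed_vector) \<Rightarrow> bool" where
  "pwd J f \<longleftrightarrow> (\<forall>j\<in>{1..J}. \<exists>b. \<forall>\<rho>\<in>{node J (j - 1)<..<node J j}. (f has_vector_derivative b) (at \<rho>))"

lemma Vh_pwd: assumes "f \<in> Vh J per" shows "pwd J f"
  unfolding pwd_def
proof
  fix j assume j: "j \<in> {1..J}"
  obtain a b where ab: "\<forall>\<rho>\<in>{node J (j - 1)..node J j}. f \<rho> = a + \<rho> *\<^sub>R b"
    using assms j unfolding Vh_def by blast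
  show "\<exists>b. \<forall>\<rho>\<in>{node J (j - 1)<..<node J j}. (f has_vector_derivative b) (at \<rho>)"
  proof (intro exI ballI)
    fix \<rho> assume r: "\<rho> \<in> {node J (j - 1)<..<node J j}"
    have d: "((\<lambda>x. a + x *\<^sub>R b) has_vector_derivative b) (at \<rho>)"
      by (auto intro!: derivative_eq_intros)
    show "(f has_vector_derivative b) (at \<rho>)"
      by (rule has_vector_derivative_transform_within_open[OF d, of "{node J (j - 1)<..<node J j}"])
         (use r ab in auto)
  qed
qed

lemma pwd_add: assumes "pwd J f" "pwd J g" shows "pwd J (\<lambda>x. f x + g x)"
  unfolding pwd_def
proof
  fix j assume j: "j \<in> {1..J}"
  obtain a where a: "\<forall>\<rho>\<in>{node J (j - 1)<..<node J j}. (f has_vector_derivative a) (at \<rho>)"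
    using assms(1) j unfolding pwd_def by blast
  obtain b where b: "\<forall>\<rho>\<in>{node J (j - 1)<..<node J j}. (g has_vector_derivative b) (at \<rho>)"
    using assms(2) j unfolding pwd_def by blast
  show "\<exists>c. \<forall>\<rho>\<in>{node J (j - 1)<..<node J j}. ((\<lambda>x. f x + g x) has_vector_derivative c) (at \<rho>)"
    using a b by (intro exI[of _ "a + b"]) (auto intro: has_vector_derivative_add)
qed

lemma pwd_pc: assumes "pwd J f" shows "pc J (\<lambda>\<rho>. H (dr f \<rho>))"
  unfolding pc_def
proof
  fix j assume j: "j \<in> {1..J}"
  obtain a where a: "\<forall>\<rho>\<in>{node J (j - 1)<..<node J j}. (f has_vector_derivative a) (at \<rho>)"
    using assms(1) j unfolding pwd_def by blast
  show "\<exists>g. continuous_on {node J (j - 1)..node J j} g \<and> (\<forall>\<rho>\<in>{node J (j - 1)<..<node J j}. H (dr f \<rho>) = g \<rho>)"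
    using a by (intro exI[of _ "\<lambda>_. H a"]) (auto simp: dr_def vector_derivative_at)
qed

lemma pc_integrable:
  fixes f :: "real \<Rightarrow> real"
  assumes "pc J f" "J > 0"
  shows "f integrable_on {0..1}"
proof -
  have "k \<le> J \<Longrightarrow> f integrable_on {0..node J k}" for k
  proof (induction k)
    case 0 then show ?case using integrable_on_refl[of f 0] by simp
  next
    case (Suc k)
    have j: "Suc k \<in> {1..J}" using Suc by simp
    obtain g where g: "continuous_on {node J k..node J (Suc k)} g" "\<forall>\<rho>\<in>{node J k<..<node J (Suc k)}. f \<rho> = g \<rho>"
    proof -
      have "\<exists>g. continuous_on {node J (Suc k - 1)..node J (Suc k)} g \<and> (\<forall>\<rho>\<in>{node J (Suc k - 1)<..<node J (Suc k)}. f \<rho> = g \<rho>)"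
        using assms(1) j unfolding pc_def by blast
      thus thesis using that by auto
    qed
    have gi: "g integrable_on {node J k..node J (Suc k)}" using g(1) integrable_continuous_interval by blast
    have eq: "\<And>x. x \<in> {node J k..node J (Suc k)} - {node J k, node J (Suc k)} \<Longrightarrow> f x = g x"
    proof -
      fix x assume "x \<in> {node J k..node J (Suc k)} - {node J k, node J (Suc k)}"
      hence "x \<in> {node J k<..<node J (Suc k)}" by auto
      thus "f x = g x" using g(2) by blast
    qed
    have "f integrable_on {node J k..node J (Suc k)}"
      by (rule integrable_spike_finite[of "{node J k, node J (Suc k)}", OF _ eq gi]) simp
    moreover have "f integrable_on {0..node J k}" using Suc by simp
    moreover have "0 \<le> node J k" by (rule node_ge0)
    moreover have "node J k \<le> node J (Suc k)" using assms(2) by (intro node_mono) auto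
    ultimately show ?case
      by (metis Henstock_Kurzweil_Integration.integrable_combine)
  qed
  from this[of J] assms(2) show ?thesis by simp
qed

lemma pc_lim_left:
  assumes "pc J f" "J > 0" "j \<in> {1..J}"
  shows "\<exists>l. (f \<longlongrightarrow> l) (at_left (node J j))"
proof -
  obtain g where g: "continuous_on {node J (j - 1)..node J j} g" "\<forall>\<rho>\<in>{node J (j - 1)<..<node J j}. f \<rho> = g \<rho>"
    using assms unfolding pc_def by blast
  have lt: "node J (j - 1) < node J j" using assms by (intro node_less) auto
  have "(g \<longlongrightarrow> g (node J j)) (at (node J j) within {node J (j - 1)..node J j})"
    using g(1) lt unfolding continuous_on_def by auto
  hence gl: "(g \<longlongrightarrow> g (node J j)) (at_left (node J j))" using at_within_Icc_at_left[OF lt] by simp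
  have "eventually (\<lambda>x. x \<in> {node J (j - 1)<..<node J j}) (at_left (node J j))"
    using lt by (auto simp: eventually_at_left_field)
  hence "eventually (\<lambda>x. g x = f x) (at_left (node J j))"
    by eventually_elim (use g(2) in auto)
  hence "(f \<longlongrightarrow> g (node J j)) (at_left (node J j))" by (rule Lim_transform_eventually[OF gl])
  thus ?thesis by blast
qed

lemma pc_lim_right:
  assumes "pc J f" "J > 0" "j \<in> {1..J}"
  shows "\<exists>l. (f \<longlongrightarrow> l) (at_right (node J (j - 1)))"
proof -
  obtain g where g: "continuous_on {node J (j - 1)..node J j} g" "\<forall>\<rho>\<in>{node J (j - 1)<..<node J j}. f \<rho> = g \<rho>"
    using assms unfolding pc_def by blast
  have lt: "node J (j - 1) < node J j" using assms by (intro node_less) auto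
  have "(g \<longlongrightarrow> g (node J (j - 1))) (at (node J (j - 1)) within {node J (j - 1)..node J j})"
    using g(1) lt unfolding continuous_on_def by auto
  hence gl: "(g \<longlongrightarrow> g (node J (j - 1))) (at_right (node J (j - 1)))" using at_within_Icc_at_right[OF lt] by simp
  have "eventually (\<lambda>x. x \<in> {node J (j - 1)<..<node J j}) (at_right (node J (j - 1)))"
    using lt by (auto simp: eventually_at_right_field)
  hence "eventually (\<lambda>x. g x = f x) (at_right (node J (j - 1)))"
    by eventually_elim (use g(2) in auto)
  hence "(f \<longlongrightarrow> g (node J (j - 1))) (at_right (node J (j - 1)))" by (rule Lim_transform_eventually[OF gl])
  thus ?thesis by blast
qed


lemma sip_cong:
  assumes "\<And>\<rho>. f \<rho> \<bullet> g \<rho> = f' \<rho> \<bullet> g' \<rho>"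
  shows "sip l J f g = sip l J f' g'"
proof -
  have e: "(\<lambda>\<rho>. f \<rho> \<bullet> g \<rho>) = (\<lambda>\<rho>. f' \<rho> \<bullet> g' \<rho>)" using assms by auto
  show ?thesis unfolding sip_def lumpip_def L2ip_def e ..
qed

lemma Lim_scale:
  fixes h :: "real \<Rightarrow> real"
  assumes "F \<noteq> bot" "\<exists>l. (h \<longlongrightarrow> l) F"
  shows "Lim F (\<lambda>x. c * h x) = c * Lim F h"
proof -
  obtain l where l: "(h \<longlongrightarrow> l) F" using assms by blast
  have "((\<lambda>x. c * h x) \<longlongrightarrow> c * l) F" using l by (intro tendsto_intros)
  thus ?thesis using tendsto_Lim[OF assms(1) l] tendsto_Lim[OF assms(1)] by simp
qed

lemma sip_scale:
  fixes A B :: "real \<Rightarrow> 'a::real_inner" and C D :: "real \<Rightarrow> 'b::real_inner"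
  assumes "J > 0" "pc J (\<lambda>\<rho>. C \<rho> \<bullet> D \<rho>)" "\<And>\<rho>. A \<rho> \<bullet> B \<rho> = c * (C \<rho> \<bullet> D \<rho>)"
  shows "sip l J A B = c * sip l J C D"
proof -
  have e: "(\<lambda>\<rho>. A \<rho> \<bullet> B \<rho>) = (\<lambda>\<rho>. c * (C \<rho> \<bullet> D \<rho>))" using assms by auto
  show ?thesis
  proof (cases l)
    case False
    then show ?thesis unfolding sip_def L2ip_def e by simp
  next
    case True
    have "(\<Sum>j = 1..J. Lim (at_left (node J j)) (\<lambda>\<rho>. c * (C \<rho> \<bullet> D \<rho>))
        + Lim (at_right (node J (j - 1))) (\<lambda>\<rho>. c * (C \<rho> \<bullet> D \<rho>)))
      = (\<Sum>j = 1..J. c * (Lim (at_left (node J j)) (\<lambda>\<rho>. C \<rho> \<bullet> D \<rho>)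
        + Lim (at_right (node J (j - 1))) (\<lambda>\<rho>. C \<rho> \<bullet> D \<rho>)))"
    proof (rule sum.cong)
      fix j assume j: "j \<in> {1..J}"
      show "Lim (at_left (node J j)) (\<lambda>\<rho>. c * (C \<rho> \<bullet> D \<rho>))
        + Lim (at_right (node J (j - 1))) (\<lambda>\<rho>. c * (C \<rho> \<bullet> D \<rho>))
        = c * (Lim (at_left (node J j)) (\<lambda>\<rho>. C \<rho> \<bullet> D \<rho>)
        + Lim (at_right (node J (j - 1))) (\<lambda>\<rho>. C \<rho> \<bullet> D \<rho>))"
        using Lim_scale[OF trivial_limit_at_left_real pc_lim_left[OF assms(2,1) j]]
              Lim_scale[OF trivial_limit_at_right_real pc_lim_right[OF assms(2,1) j]]
        by (simp add: distrib_left)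
    qed simp
    then show ?thesis using True unfolding sip_def lumpip_def e by (simp add: sum_distrib_left)
  qed
qed

lemma Vh_scale: assumes "f \<in> Vh J per" shows "(\<lambda>\<rho>. c *\<^sub>R f \<rho>) \<in> Vh J per"
proof -
  have c: "continuous_on {0..1} f" and h: "\<forall>j\<in>{1..J}. \<exists>a b. \<forall>\<rho>\<in>{node J (j - 1)..node J j}. f \<rho> = a + \<rho> *\<^sub>R b"
    and p: "per \<longrightarrow> f 0 = f 1" using assms unfolding Vh_def by auto
  have "\<forall>j\<in>{1..J}. \<exists>a b. \<forall>\<rho>\<in>{node J (j - 1)..node J j}. c *\<^sub>R f \<rho> = a + \<rho> *\<^sub>R b"
  proof
    fix j assume j: "j \<in> {1..J}"
    then obtain a b where ab: "\<forall>\<rho>\<in>{node J (j - 1)..node J j}. f \<rho> = a + \<rho> *\<^sub>R b" using h by blast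
    show "\<exists>a b. \<forall>\<rho>\<in>{node J (j - 1)..node J j}. c *\<^sub>R f \<rho> = a + \<rho> *\<^sub>R b"
      using ab by (intro exI[of _ "c *\<^sub>R a"] exI[of _ "c *\<^sub>R b"]) (simp add: scaleR_add_right)
  qed
  moreover have "continuous_on {0..1} (\<lambda>\<rho>. c *\<^sub>R f \<rho>)" using c by (intro continuous_intros)
  ultimately show ?thesis using p unfolding Vh_def by auto
qed

lemma Wsh_scale: "k \<in> Wsh l J per bc \<Longrightarrow> (\<lambda>\<rho>. c * k \<rho>) \<in> Wsh l J per bc"
  using Vh_scale[of k J per c] by (auto simp: Wsh_def Wh0_def)

lemma Wsh_Vh: "k \<in> Wsh l J per bc \<Longrightarrow> k \<in> Vh J per"
  by (auto simp: Wsh_def Wh0_def split: if_splits)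

lemma W2_scale: "k \<in> W2 (Wsh l J per bc) \<Longrightarrow> (\<lambda>\<rho>. c *\<^sub>R k \<rho>) \<in> W2 (Wsh l J per bc)"
  using Wsh_scale[of "\<lambda>\<rho>. fst (k \<rho>)" l J per bc c] Wsh_scale[of "\<lambda>\<rho>. snd (k \<rho>)" l J per bc c]
  by (auto simp: W2_def)


lemma AE_pos:
  assumes "pwd J X" "AssumpA per bc X" "J > 0" "j \<in> {1..J}" "\<rho> \<in> {node J (j - 1)<..<node J j}"
  shows "0 < norm (dr X \<rho>)"
proof -
  let ?U = "{node J (j - 1)<..<node J j}"
  obtain b where b: "\<forall>\<rho>\<in>?U. (X has_vector_derivative b) (at \<rho>)"
    using assms(1,4) unfolding pwd_def by blast
  have drb: "\<forall>\<rho>\<in>?U. dr X \<rho> = b" using b by (simp add: dr_def vector_derivative_at)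
  have "b \<noteq> 0"
  proof
    assume b0: "b = 0"
    have ae: "AE \<rho> in lebesgue_on {0..1}. 0 < norm (dr X \<rho>)" using assms(2) unfolding AssumpA_def by blast
    then obtain N where N: "{x \<in> space (lebesgue_on {0..1}). \<not> 0 < norm (dr X x)} \<subseteq> N"
      "emeasure (lebesgue_on {0..1}) N = 0" "N \<in> sets (lebesgue_on {0..1})"
      by (rule AE_E)
    have Nn: "N \<in> null_sets (lebesgue_on {0..1})" using N by auto
    hence "N \<in> null_sets lebesgue"
      using null_sets_restrict_space[of "{0..1::real}" lebesgue N] by simp
    have sub01: "?U \<subseteq> {0..1}"
      using assms(3,4) node_le1[of J j] node_ge0[of J "j-1"] by auto
    have "?U \<subseteq> N"
    proof
      fix x assume x: "x \<in> ?U"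
      hence "x \<in> {0..1}" "dr X x = 0" using drb b0 sub01 by auto
      thus "x \<in> N" using N(1) by auto
    qed
    have nN: "negligible N" using \<open>N \<in> null_sets lebesgue\<close> negligible_iff_null_sets by blast
    have nU: "negligible ?U" by (rule negligible_subset[OF nN \<open>?U \<subseteq> N\<close>])
    have bU: "box (node J (j - 1)) (node J j) = ?U" by (rule box_real)
    have nB: "negligible (box (node J (j - 1)) (node J j))" using nU by (simp only: bU)
    have "box (node J (j - 1)) (node J j) = {}" by (rule iffD1[OF negligible_interval(2) nB])
    moreover have lt: "node J (j - 1) < node J j" using assms(3,4) by (intro node_less) auto
    ultimately show False unfolding bU by auto
  qed
  thus ?thesis using drb assms(5) by simp
qed

lemma Xe1_nonneg:
  assumes "X \<in> VVh0 J per bc" "AssumpA per bc X" "\<rho> \<in> {0..1}"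
  shows "0 \<le> X \<rho> \<bullet> e1"
proof (cases "\<rho> \<in> bpart per bc B0")
  case True thus ?thesis using assms(1) unfolding VVh0_def by auto
next
  case False
  hence "\<rho> \<in> {0..1} - bpart per bc B0" using assms(3) by blast
  moreover have "\<forall>\<rho>\<in>{0..1} - bpart per bc B0. 0 < X \<rho> \<bullet> e1" using assms(2) unfolding AssumpA_def by blast
  ultimately have "0 < X \<rho> \<bullet> e1" by blast
  thus ?thesis by simp
qed


lemma pc_inner: "pc J (f::real\<Rightarrow>'a::real_inner) \<Longrightarrow> pc J g \<Longrightarrow> pc J (\<lambda>\<rho>. f \<rho> \<bullet> g \<rho>)"
  by (rule pc_op2[OF _ _ continuous_on_inner])
lemma pc_scaleR: "pc J (f::real\<Rightarrow>real) \<Longrightarrow> pc J (g::real\<Rightarrow>'a::real_normed_vector) \<Longrightarrow> pc J (\<lambda>\<rho>. f \<rho> *\<^sub>R g \<rho>)"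
  by (rule pc_op2[OF _ _ continuous_on_scaleR])
lemma pc_mult: "pc J (f::real\<Rightarrow>real) \<Longrightarrow> pc J g \<Longrightarrow> pc J (\<lambda>\<rho>. f \<rho> * g \<rho>)"
  by (rule pc_op2[OF _ _ continuous_on_mult])
lemma pc_add: "pc J (f::real\<Rightarrow>'a::real_normed_vector) \<Longrightarrow> pc J g \<Longrightarrow> pc J (\<lambda>\<rho>. f \<rho> + g \<rho>)"
  by (rule pc_op2[OF _ _ continuous_on_add])
lemma pc_norm: "pc J (f::real\<Rightarrow>'a::real_normed_vector) \<Longrightarrow> pc J (\<lambda>\<rho>. norm (f \<rho>))"
  by (rule pc_op1[OF _ continuous_on_norm])
lemma pc_power: "pc J (f::real\<Rightarrow>real) \<Longrightarrow> pc J (\<lambda>\<rho>. (f \<rho>)^n)"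
  by (rule pc_op1[OF _ continuous_on_power])
lemma pwd_pc_id: "pwd J f \<Longrightarrow> pc J (dr f)"
  using pwd_pc[of J f "\<lambda>x. x"] by simp
lemma pwd_pc_norm: "pwd J f \<Longrightarrow> pc J (\<lambda>\<rho>. norm (dr f \<rho>))"
  using pwd_pc[of J f "\<lambda>x. norm x"] by simp
lemma pwd_pc_invnorm: "pwd J f \<Longrightarrow> pc J (\<lambda>\<rho>. inverse (norm (dr f \<rho>)))"
  using pwd_pc[of J f "\<lambda>x. inverse (norm x)"] by simp

lemma key_ineq:
  fixes v w :: "real \<times> real"
  assumes "0 \<le> x" "0 < norm v"
  shows "0 \<le> x * (((v + w) \<bullet> w) / norm v - norm (v + w) + norm v)"
proof -
  let ?u = "v + w"
  have cs: "?u \<bullet> v \<le> norm ?u * norm v" by (rule norm_cauchy_schwarz)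
  have w: "w = ?u - v" by simp
  have "?u \<bullet> w = norm ?u ^ 2 - ?u \<bullet> v"
    by (simp add: inner_add_right inner_add_left power2_norm_eq_inner inner_commute)
  hence "(?u \<bullet> w) - norm ?u * norm v + norm v * norm v \<ge> (norm ?u - norm v)^2"
    using cs by (simp add: power2_eq_square algebra_simps)
  hence "(?u \<bullet> w) - norm ?u * norm v + norm v * norm v \<ge> 0"
    by (smt (verit) zero_le_power2)
  hence "((?u \<bullet> w) - norm ?u * norm v + norm v * norm v) / norm v \<ge> 0"
    using assms(2) by simp
  moreover have "((?u \<bullet> w) - norm ?u * norm v + norm v * norm v) / norm v
      = (?u \<bullet> w) / norm v - norm ?u + norm v"
    using assms(2) by (simp add: field_simps)
  ultimately show ?thesis using assms(1) by simp
qed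


lemma pwd_dr:
  assumes "pwd J f" "j \<in> {1..J}"
  obtains b where "\<forall>\<rho>\<in>{node J (j - 1)<..<node J j}. dr f \<rho> = b \<and> (f has_vector_derivative b) (at \<rho>)"
  using assms unfolding pwd_def by (metis dr_def vector_derivative_at)

lemma L2_ineq:
  assumes J: "J > 0" and Xm: "Xm \<in> VVh0 J per bc" and A: "AssumpA per bc Xm" and dX: "dX \<in> Vh J per"
  shows "L2ip (\<lambda>\<rho>. (Xm \<rho> + dX \<rho>) \<bullet> e1) (\<lambda>\<rho>. norm (dr (\<lambda>\<rho>. Xm \<rho> + dX \<rho>) \<rho>))
       - L2ip (\<lambda>\<rho>. Xm \<rho> \<bullet> e1) (\<lambda>\<rho>. norm (dr Xm \<rho>))
    \<le> L2ip (\<lambda>\<rho>. dX \<rho> \<bullet> e1) (\<lambda>\<rho>. norm (dr (\<lambda>\<rho>. Xm \<rho> + dX \<rho>) \<rho>))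
     + L2ip (\<lambda>\<rho>. (Xm \<rho> \<bullet> e1) *\<^sub>R dr (\<lambda>\<rho>. Xm \<rho> + dX \<rho>) \<rho>) (\<lambda>\<rho>. inverse (norm (dr Xm \<rho>)) *\<^sub>R dr dX \<rho>)"
proof -
  define X' where "X' = (\<lambda>\<rho>. Xm \<rho> + dX \<rho>)"
  have XmV: "Xm \<in> Vh J per" using Xm unfolding VVh0_def by auto
  have pXm: "pwd J Xm" using Vh_pwd[OF XmV] .
  have pdX: "pwd J dX" using Vh_pwd[OF dX] .
  have pX': "pwd J X'" unfolding X'_def by (rule pwd_add[OF pXm pdX])
  have cXm: "pc J Xm" by (rule Vh_pc[OF XmV J])
  have cdX: "pc J dX" by (rule Vh_pc[OF dX J])
  have cX': "pc J X'" unfolding X'_def by (rule pc_add[OF cXm cdX])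
  have ce1: "pc J (\<lambda>_. e1)" by (rule pc_const)
  define u1 where "u1 = (\<lambda>\<rho>. (dX \<rho> \<bullet> e1) \<bullet> norm (dr X' \<rho>))"
  define u2 where "u2 = (\<lambda>\<rho>. ((Xm \<rho> \<bullet> e1) *\<^sub>R dr X' \<rho>) \<bullet> (inverse (norm (dr Xm \<rho>)) *\<^sub>R dr dX \<rho>))"
  define u3 where "u3 = (\<lambda>\<rho>. (X' \<rho> \<bullet> e1) \<bullet> norm (dr X' \<rho>))"
  define u4 where "u4 = (\<lambda>\<rho>. (Xm \<rho> \<bullet> e1) \<bullet> norm (dr Xm \<rho>))"
  have i1: "u1 integrable_on {0..1}" unfolding u1_def
    by (rule pc_integrable[OF _ J], intro pc_inner pwd_pc_norm pX' cdX ce1)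
  have i2: "u2 integrable_on {0..1}" unfolding u2_def
    by (rule pc_integrable[OF _ J], intro pc_inner pc_scaleR pwd_pc_invnorm pwd_pc_id pX' pXm pdX cXm ce1)
  have i3: "u3 integrable_on {0..1}" unfolding u3_def
    by (rule pc_integrable[OF _ J], intro pc_inner pwd_pc_norm pX' cX' ce1)
  have i4: "u4 integrable_on {0..1}" unfolding u4_def
    by (rule pc_integrable[OF _ J], intro pc_inner pwd_pc_norm pXm cXm ce1)
  define h where "h = (\<lambda>\<rho>. u1 \<rho> + u2 \<rho> - u3 \<rho> + u4 \<rho>)"
  have ih: "h integrable_on {0..1}" unfolding h_def
    by (intro integrable_add integrable_diff i1 i2 i3 i4)
  have Ih: "integral {0..1} h = integral {0..1} u1 + integral {0..1} u2 - integral {0..1} u3 + integral {0..1} u4"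
    unfolding h_def
    by (simp add: integral_add integral_diff integrable_add integrable_diff i1 i2 i3 i4)
  define N where "N = node J ` {0..J}"
  have fN: "finite N" unfolding N_def by simp
  define h' where "h' = (\<lambda>\<rho>. if \<rho> \<in> N then 0 else h \<rho>)"
  have eqh: "\<And>x. x \<in> {0..1} - N \<Longrightarrow> h' x = h x" unfolding h'_def by simp
  have ih': "h' integrable_on {0..1}" by (rule integrable_spike_finite[OF fN eqh ih])
  have Ih': "integral {0..1} h = integral {0..1} h'"
    by (rule integral_spike[OF negligible_finite[OF fN] eqh])
  have pos: "0 \<le> h' \<rho>" if r: "\<rho> \<in> {0..1}" for \<rho>
  proof (cases "\<rho> \<in> N")
    case True thus ?thesis unfolding h'_def by simp
  next
    case False
    then obtain j where j: "j \<in> {1..J}" and rj: "\<rho> \<in> {node J (j - 1)<..<node J j}"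
      using in_some_interval[OF J r] unfolding N_def by blast
    obtain bm where bm: "\<forall>\<rho>\<in>{node J (j - 1)<..<node J j}. dr Xm \<rho> = bm \<and> (Xm has_vector_derivative bm) (at \<rho>)"
      using pwd_dr[OF pXm j] by blast
    obtain bd where bd: "\<forall>\<rho>\<in>{node J (j - 1)<..<node J j}. dr dX \<rho> = bd \<and> (dX has_vector_derivative bd) (at \<rho>)"
      using pwd_dr[OF pdX j] by blast
    have "(X' has_vector_derivative bm + bd) (at \<rho>)"
      unfolding X'_def using bm bd rj by (auto intro: has_vector_derivative_add)
    hence d': "dr X' \<rho> = bm + bd" by (simp add: dr_def vector_derivative_at)
    have dm: "dr Xm \<rho> = bm" and dd: "dr dX \<rho> = bd" using bm bd rj by auto
    have nbm: "0 < norm bm" using AE_pos[OF pXm A J j rj] dm by simp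
    have x0: "0 \<le> Xm \<rho> \<bullet> e1" by (rule Xe1_nonneg[OF Xm A r])
    have k: "0 \<le> (Xm \<rho> \<bullet> e1) * (((bm + bd) \<bullet> bd) / norm bm - norm (bm + bd) + norm bm)"
      by (rule key_ineq[OF x0 nbm])
    have "h \<rho> = (Xm \<rho> \<bullet> e1) * (((bm + bd) \<bullet> bd) / norm bm - norm (bm + bd) + norm bm)"
      unfolding h_def u1_def u2_def u3_def u4_def d' dm dd
      by (simp add: X'_def inner_add_left algebra_simps divide_inverse)
    thus ?thesis using k False unfolding h'_def by simp
  qed
  have "0 \<le> integral {0..1} h'" by (rule integral_nonneg[OF ih' pos])
  hence "0 \<le> integral {0..1} u1 + integral {0..1} u2 - integral {0..1} u3 + integral {0..1} u4"
    using Ih Ih' by simp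
  thus ?thesis unfolding L2ip_def u1_def u2_def u3_def u4_def X'_def by simp
qed


lemma inner_e1: "x \<bullet> e1 = fst x" by (cases x) (simp add: inner_Pair)
lemma inner_e2: "x \<bullet> e2 = snd x" by (cases x) (simp add: inner_Pair)

lemma finite_bpart: "finite (bpart per bc t)"
  by (rule finite_subset[of _ "{0,1}"]) (auto simp: bpart_def bdry_def)

lemma B2_pt:
  fixes r a d :: real
  shows "r * (a + d)^2 \<le> r * a^2 + 2 * ((posp r * (a + d) + negp r * a) * d)"
proof (cases "0 \<le> r")
  case True
  hence "posp r = r" "negp r = 0" by (auto simp: posp_def negp_def)
  moreover have "0 \<le> r * d^2" using True by simp
  ultimately show ?thesis by (simp add: power2_eq_square algebra_simps)
next
  case False
  hence "posp r = 0" "negp r = r" by (auto simp: posp_def negp_def)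
  moreover have "0 \<le> - r * d^2" using False by (simp add: mult_nonpos_nonneg)
  ultimately show ?thesis by (simp add: power2_eq_square algebra_simps)
qed

lemma bdry_ineq:
  assumes dX: "dX \<in> VVhd J per bc"
  shows "2 * pi * (\<Sum>p\<in>bpart per bc B1. rho p * ((Xm p + dX p) \<bullet> e1) * ((Xm p + dX p) \<bullet> e2))
     + pi * (\<Sum>p\<in>bpart per bc B2. rho p * ((Xm p + dX p) \<bullet> e1)\<^sup>2)
     + 2 * pi * Bm per bc rho Xm (\<lambda>\<rho>. Xm \<rho> + dX \<rho>) dX
   \<le> 2 * pi * (\<Sum>p\<in>bpart per bc B1. rho p * (Xm p \<bullet> e1) * (Xm p \<bullet> e2))
     + pi * (\<Sum>p\<in>bpart per bc B2. rho p * (Xm p \<bullet> e1)\<^sup>2)"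
proof -
  have z1: "\<forall>p\<in>bpart per bc B1. dX p \<bullet> e1 = 0" using dX unfolding VVhd_def by auto
  have s1: "(\<Sum>p\<in>bpart per bc B1. rho p * ((Xm p + dX p) \<bullet> e1) * ((Xm p + dX p) \<bullet> e2))
     = (\<Sum>p\<in>bpart per bc B1. rho p * (Xm p \<bullet> e1) * (Xm p \<bullet> e2))
     + (\<Sum>p\<in>bpart per bc B1. rho p * (Xm p \<bullet> e1) * (dX p \<bullet> e2))"
    unfolding sum.distrib[symmetric]
    by (rule sum.cong) (use z1 in \<open>auto simp: inner_add_left algebra_simps\<close>)
  have s2: "(\<Sum>p\<in>bpart per bc B2. rho p * ((Xm p + dX p) \<bullet> e1)\<^sup>2)
     \<le> (\<Sum>p\<in>bpart per bc B2. rho p * (Xm p \<bullet> e1)\<^sup>2)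
     + 2 * (\<Sum>p\<in>bpart per bc B2. ((posp (rho p) *\<^sub>R (Xm p + dX p) + negp (rho p) *\<^sub>R Xm p) \<bullet> e1) * (dX p \<bullet> e1))"
    unfolding sum_distrib_left sum.distrib[symmetric]
  proof (rule sum_mono)
    fix p
    show "rho p * ((Xm p + dX p) \<bullet> e1)\<^sup>2
      \<le> rho p * (Xm p \<bullet> e1)\<^sup>2 + 2 * (((posp (rho p) *\<^sub>R (Xm p + dX p) + negp (rho p) *\<^sub>R Xm p) \<bullet> e1) * (dX p \<bullet> e1))"
      using B2_pt[of "rho p" "Xm p \<bullet> e1" "dX p \<bullet> e1"] by (simp add: inner_add_left)
  qed
  have bm: "Bm per bc rho Xm (\<lambda>\<rho>. Xm \<rho> + dX \<rho>) dX
     = - (\<Sum>p\<in>bpart per bc B1. rho p * (Xm p \<bullet> e1) * (dX p \<bullet> e2))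
       - (\<Sum>p\<in>bpart per bc B2. ((posp (rho p) *\<^sub>R (Xm p + dX p) + negp (rho p) *\<^sub>R Xm p) \<bullet> e1) * (dX p \<bullet> e1))"
    unfolding Bm_def by simp
  have s2': "pi * (\<Sum>p\<in>bpart per bc B2. rho p * ((Xm p + dX p) \<bullet> e1)\<^sup>2)
     \<le> pi * ((\<Sum>p\<in>bpart per bc B2. rho p * (Xm p \<bullet> e1)\<^sup>2)
     + 2 * (\<Sum>p\<in>bpart per bc B2. ((posp (rho p) *\<^sub>R (Xm p + dX p) + negp (rho p) *\<^sub>R Xm p) \<bullet> e1) * (dX p \<bullet> e1)))"
    by (rule mult_left_mono[OF s2]) simp
  show ?thesis unfolding bm s1 using s2' by (simp add: algebra_simps)
qed

lemma core:
  assumes J: "J > 0" and Xm: "Xm \<in> VVh0 J per bc" and A: "AssumpA per bc Xm" and dX: "dX \<in> VVhd J per bc"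
    and eq: "T + L2ip (\<lambda>\<rho>. dX \<rho> \<bullet> e1) (\<lambda>\<rho>. norm (dr (\<lambda>\<rho>. Xm \<rho> + dX \<rho>) \<rho>))
     + L2ip (\<lambda>\<rho>. (Xm \<rho> \<bullet> e1) *\<^sub>R dr (\<lambda>\<rho>. Xm \<rho> + dX \<rho>) \<rho>) (\<lambda>\<rho>. inverse (norm (dr Xm \<rho>)) *\<^sub>R dr dX \<rho>)
     = Bm per bc rho Xm (\<lambda>\<rho>. Xm \<rho> + dX \<rho>) dX"
  shows "Energy per bc rho (\<lambda>\<rho>. Xm \<rho> + dX \<rho>) + 2 * pi * T \<le> Energy per bc rho Xm"
proof -
  have dXV: "dX \<in> Vh J per" using dX unfolding VVhd_def VVh0_def by auto
  note L = L2_ineq[OF J Xm A dXV]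
  note B = bdry_ineq[OF dX, of rho Xm]
  have L2: "2 * pi * (L2ip (\<lambda>\<rho>. (Xm \<rho> + dX \<rho>) \<bullet> e1) (\<lambda>\<rho>. norm (dr (\<lambda>\<rho>. Xm \<rho> + dX \<rho>) \<rho>))
       - L2ip (\<lambda>\<rho>. Xm \<rho> \<bullet> e1) (\<lambda>\<rho>. norm (dr Xm \<rho>)))
    \<le> 2 * pi * (L2ip (\<lambda>\<rho>. dX \<rho> \<bullet> e1) (\<lambda>\<rho>. norm (dr (\<lambda>\<rho>. Xm \<rho> + dX \<rho>) \<rho>))
     + L2ip (\<lambda>\<rho>. (Xm \<rho> \<bullet> e1) *\<^sub>R dr (\<lambda>\<rho>. Xm \<rho> + dX \<rho>) \<rho>) (\<lambda>\<rho>. inverse (norm (dr Xm \<rho>)) *\<^sub>R dr dX \<rho>))"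
    by (rule mult_left_mono[OF L]) simp
  define L' where "L' = L2ip (\<lambda>\<rho>. (Xm \<rho> + dX \<rho>) \<bullet> e1) (\<lambda>\<rho>. norm (dr (\<lambda>\<rho>. Xm \<rho> + dX \<rho>) \<rho>))"
  define L0 where "L0 = L2ip (\<lambda>\<rho>. Xm \<rho> \<bullet> e1) (\<lambda>\<rho>. norm (dr Xm \<rho>))"
  define I1 where "I1 = L2ip (\<lambda>\<rho>. dX \<rho> \<bullet> e1) (\<lambda>\<rho>. norm (dr (\<lambda>\<rho>. Xm \<rho> + dX \<rho>) \<rho>))"
  define I2 where "I2 = L2ip (\<lambda>\<rho>. (Xm \<rho> \<bullet> e1) *\<^sub>R dr (\<lambda>\<rho>. Xm \<rho> + dX \<rho>) \<rho>) (\<lambda>\<rho>. inverse (norm (dr Xm \<rho>)) *\<^sub>R dr dX \<rho>)"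
  define BB where "BB = Bm per bc rho Xm (\<lambda>\<rho>. Xm \<rho> + dX \<rho>) dX"
  define S1' where "S1' = (\<Sum>p\<in>bpart per bc B1. rho p * ((Xm p + dX p) \<bullet> e1) * ((Xm p + dX p) \<bullet> e2))"
  define S2' where "S2' = (\<Sum>p\<in>bpart per bc B2. rho p * ((Xm p + dX p) \<bullet> e1)\<^sup>2)"
  define S1 where "S1 = (\<Sum>p\<in>bpart per bc B1. rho p * (Xm p \<bullet> e1) * (Xm p \<bullet> e2))"
  define S2 where "S2 = (\<Sum>p\<in>bpart per bc B2. rho p * (Xm p \<bullet> e1)\<^sup>2)"
  have E1: "Energy per bc rho (\<lambda>\<rho>. Xm \<rho> + dX \<rho>) = 2 * pi * L' + 2 * pi * S1' + pi * S2'"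
    unfolding Energy_def L'_def S1'_def S2'_def by simp
  have E0: "Energy per bc rho Xm = 2 * pi * L0 + 2 * pi * S1 + pi * S2"
    unfolding Energy_def L0_def S1_def S2_def by simp
  have l: "2 * pi * (L' - L0) \<le> 2 * pi * (I1 + I2)" using L2 unfolding L'_def L0_def I1_def I2_def .
  have b: "2 * pi * S1' + pi * S2' + 2 * pi * BB \<le> 2 * pi * S1 + pi * S2"
    using B unfolding S1'_def S2'_def S1_def S2_def BB_def .
  have e: "T + I1 + I2 = BB" using eq unfolding I1_def I2_def BB_def .
  have "2 * pi * L' + 2 * pi * S1' + pi * S2' + 2 * pi * T \<le> 2 * pi * L0 + 2 * pi * S1 + pi * S2"
  proof -
    have tT: "T = BB - (I1 + I2)" using e by linarith
    have "2 * pi * T = 2 * pi * BB - 2 * pi * (I1 + I2)" unfolding tT by (rule right_diff_distrib)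
    moreover have "2 * pi * (L' - L0) = 2 * pi * L' - 2 * pi * L0" by (simp add: algebra_simps)
    ultimately show ?thesis using l b by linarith
  qed
  thus ?thesis unfolding E1 E0 .
qed


lemma pc_W2:
  assumes "k \<in> W2 (Wsh l J per bc)" "J > 0"
  shows "pc J k"
proof -
  have "(\<lambda>\<rho>. fst (k \<rho>)) \<in> Vh J per" "(\<lambda>\<rho>. snd (k \<rho>)) \<in> Vh J per"
    using assms(1) Wsh_Vh unfolding W2_def by auto
  hence "pc J (\<lambda>\<rho>. fst (k \<rho>))" "pc J (\<lambda>\<rho>. snd (k \<rho>))" using Vh_pc assms(2) by auto
  hence "pc J (\<lambda>\<rho>. (fst (k \<rho>), snd (k \<rho>)))" by (rule pc_op2[OF _ _ continuous_on_Pair])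
  thus ?thesis by simp
qed

theorem theorem4p6:
  fixes J :: nat and per lumped :: bool and bc :: "real \<Rightarrow> bctype"
    and rho :: "real \<Rightarrow> real" and Xm :: "real \<Rightarrow> real \<times> real" and dt :: real
  assumes "3 \<le> J"
    and "\<forall>p\<in>{0, 1}. \<bar>rho p\<bar> \<le> 1"
    and "Xm \<in> VVh0 J per bc"
    and "AssumpA per bc Xm"
    and "0 < dt"
  shows
   "(\<forall>(dX :: real \<Rightarrow> real \<times> real) (\<kappa> :: real \<Rightarrow> real) Xm1.
      dX \<in> VVhd J per bc \<longrightarrow> \<kappa> \<in> Wsh lumped J per bc \<longrightarrow> Xm1 = (\<lambda>\<rho>. Xm \<rho> + dX \<rho>) \<longrightarrow>
      (\<forall>ch\<in>Wsh lumped J per bc.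
         sip lumped J (\<lambda>\<rho>. (Xm \<rho> \<bullet> e1) *\<^sub>R ((1 / dt) *\<^sub>R (Xm1 \<rho> - Xm \<rho>)))
                      (\<lambda>\<rho>. (ch \<rho> * norm (dr Xm \<rho>)) *\<^sub>R nu Xm \<rho>)
       = sip lumped J (\<lambda>\<rho>. (Xm \<rho> \<bullet> e1) * \<kappa> \<rho>) (\<lambda>\<rho>. ch \<rho> * norm (dr Xm \<rho>))) \<longrightarrow>
      (\<forall>\<eta>\<in>VVhd J per bc.
         sip lumped J (\<lambda>\<rho>. ((Xm \<rho> \<bullet> e1) * \<kappa> \<rho>) *\<^sub>R nu Xm \<rho>) (\<lambda>\<rho>. norm (dr Xm \<rho>) *\<^sub>R \<eta> \<rho>)
       + L2ip (\<lambda>\<rho>. \<eta> \<rho> \<bullet> e1) (\<lambda>\<rho>. norm (dr Xm1 \<rho>))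
       + L2ip (\<lambda>\<rho>. (Xm \<rho> \<bullet> e1) *\<^sub>R dr Xm1 \<rho>) (\<lambda>\<rho>. inverse (norm (dr Xm \<rho>)) *\<^sub>R dr \<eta> \<rho>)
       = Bm per bc rho Xm Xm1 \<eta>) \<longrightarrow>
      Energy per bc rho Xm1
        + 2 * pi * dt * sip lumped J (\<lambda>\<rho>. (Xm \<rho> \<bullet> e1) * (\<kappa> \<rho>)\<^sup>2) (\<lambda>\<rho>. norm (dr Xm \<rho>))
      \<le> Energy per bc rho Xm)
  \<and> (\<forall>(dX :: real \<Rightarrow> real \<times> real) (\<kappa> :: real \<Rightarrow> real \<times> real) Xm1.
      dX \<in> VVhd J per bc \<longrightarrow> \<kappa> \<in> W2 (Wsh lumped J per bc) \<longrightarrow> Xm1 = (\<lambda>\<rho>. Xm \<rho> + dX \<rho>) \<longrightarrow>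
      (\<forall>ch\<in>W2 (Wsh lumped J per bc).
         sip lumped J (\<lambda>\<rho>. (Xm \<rho> \<bullet> e1) *\<^sub>R ((1 / dt) *\<^sub>R (Xm1 \<rho> - Xm \<rho>)))
                      (\<lambda>\<rho>. norm (dr Xm \<rho>) *\<^sub>R ch \<rho>)
       = sip lumped J (\<lambda>\<rho>. (Xm \<rho> \<bullet> e1) *\<^sub>R \<kappa> \<rho>) (\<lambda>\<rho>. norm (dr Xm \<rho>) *\<^sub>R ch \<rho>)) \<longrightarrow>
      (\<forall>\<eta>\<in>VVhd J per bc.
         sip lumped J (\<lambda>\<rho>. (Xm \<rho> \<bullet> e1) *\<^sub>R \<kappa> \<rho>) (\<lambda>\<rho>. norm (dr Xm \<rho>) *\<^sub>R \<eta> \<rho>)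
       + L2ip (\<lambda>\<rho>. \<eta> \<rho> \<bullet> e1) (\<lambda>\<rho>. norm (dr Xm1 \<rho>))
       + L2ip (\<lambda>\<rho>. (Xm \<rho> \<bullet> e1) *\<^sub>R dr Xm1 \<rho>) (\<lambda>\<rho>. inverse (norm (dr Xm \<rho>)) *\<^sub>R dr \<eta> \<rho>)
       = Bm per bc rho Xm Xm1 \<eta>) \<longrightarrow>
      Energy per bc rho Xm1
        + 2 * pi * dt * sip lumped J (\<lambda>\<rho>. (Xm \<rho> \<bullet> e1) * (norm (\<kappa> \<rho>))\<^sup>2) (\<lambda>\<rho>. norm (dr Xm \<rho>))
      \<le> Energy per bc rho Xm)"
proof (intro conjI allI impI)
  have J: "J > 0" using assms(1) by simp
  have Xm: "Xm \<in> VVh0 J per bc" and A: "AssumpA per bc Xm" and dt: "0 < dt" using assms by auto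
  have XmV: "Xm \<in> Vh J per" using Xm unfolding VVh0_def by auto
  have cXe1: "pc J (\<lambda>\<rho>. Xm \<rho> \<bullet> e1)" by (rule pc_inner[OF Vh_pc[OF XmV J] pc_const])
  have cn: "pc J (\<lambda>\<rho>. norm (dr Xm \<rho>))" by (rule pwd_pc_norm[OF Vh_pwd[OF XmV]])
  {
    fix dX :: "real \<Rightarrow> real \<times> real" and \<kappa> :: "real \<Rightarrow> real" and Xm1
    assume dX: "dX \<in> VVhd J per bc" and k: "\<kappa> \<in> Wsh lumped J per bc" and X1: "Xm1 = (\<lambda>\<rho>. Xm \<rho> + dX \<rho>)"
      and eq1: "\<forall>ch\<in>Wsh lumped J per bc.
         sip lumped J (\<lambda>\<rho>. (Xm \<rho> \<bullet> e1) *\<^sub>R ((1 / dt) *\<^sub>R (Xm1 \<rho> - Xm \<rho>)))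
                      (\<lambda>\<rho>. (ch \<rho> * norm (dr Xm \<rho>)) *\<^sub>R nu Xm \<rho>)
       = sip lumped J (\<lambda>\<rho>. (Xm \<rho> \<bullet> e1) * \<kappa> \<rho>) (\<lambda>\<rho>. ch \<rho> * norm (dr Xm \<rho>))"
      and eq2: "\<forall>\<eta>\<in>VVhd J per bc.
         sip lumped J (\<lambda>\<rho>. ((Xm \<rho> \<bullet> e1) * \<kappa> \<rho>) *\<^sub>R nu Xm \<rho>) (\<lambda>\<rho>. norm (dr Xm \<rho>) *\<^sub>R \<eta> \<rho>)
       + L2ip (\<lambda>\<rho>. \<eta> \<rho> \<bullet> e1) (\<lambda>\<rho>. norm (dr Xm1 \<rho>))
       + L2ip (\<lambda>\<rho>. (Xm \<rho> \<bullet> e1) *\<^sub>R dr Xm1 \<rho>) (\<lambda>\<rho>. inverse (norm (dr Xm \<rho>)) *\<^sub>R dr \<eta> \<rho>)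
       = Bm per bc rho Xm Xm1 \<eta>"
    have kd: "(\<lambda>\<rho>. dt * \<kappa> \<rho>) \<in> Wsh lumped J per bc" by (rule Wsh_scale[OF k])
    have e1': "sip lumped J (\<lambda>\<rho>. (Xm \<rho> \<bullet> e1) *\<^sub>R ((1 / dt) *\<^sub>R (Xm1 \<rho> - Xm \<rho>)))
                      (\<lambda>\<rho>. (dt * \<kappa> \<rho> * norm (dr Xm \<rho>)) *\<^sub>R nu Xm \<rho>)
       = sip lumped J (\<lambda>\<rho>. (Xm \<rho> \<bullet> e1) * \<kappa> \<rho>) (\<lambda>\<rho>. dt * \<kappa> \<rho> * norm (dr Xm \<rho>))"
      using bspec[OF eq1 kd] by simp
    define T where "T = sip lumped J (\<lambda>\<rho>. ((Xm \<rho> \<bullet> e1) * \<kappa> \<rho>) *\<^sub>R nu Xm \<rho>) (\<lambda>\<rho>. norm (dr Xm \<rho>) *\<^sub>R dX \<rho>)"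
    define S where "S = sip lumped J (\<lambda>\<rho>. (Xm \<rho> \<bullet> e1) * (\<kappa> \<rho>)\<^sup>2) (\<lambda>\<rho>. norm (dr Xm \<rho>))"
    have "sip lumped J (\<lambda>\<rho>. (Xm \<rho> \<bullet> e1) *\<^sub>R ((1 / dt) *\<^sub>R (Xm1 \<rho> - Xm \<rho>)))
                      (\<lambda>\<rho>. (dt * \<kappa> \<rho> * norm (dr Xm \<rho>)) *\<^sub>R nu Xm \<rho>) = T"
      unfolding T_def X1 by (rule sip_cong) (use dt in \<open>simp add: inner_commute\<close>)
    moreover have "sip lumped J (\<lambda>\<rho>. (Xm \<rho> \<bullet> e1) * \<kappa> \<rho>) (\<lambda>\<rho>. dt * \<kappa> \<rho> * norm (dr Xm \<rho>)) = dt * S"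
      unfolding S_def
    proof (rule sip_scale[OF J])
      have ck: "pc J \<kappa>" by (rule Vh_pc[OF Wsh_Vh[OF k] J])
      show "pc J (\<lambda>\<rho>. ((Xm \<rho> \<bullet> e1) * (\<kappa> \<rho>)\<^sup>2) \<bullet> norm (dr Xm \<rho>))"
        by (intro pc_inner pc_mult pc_power cXe1 cn ck)
      fix \<rho> show "((Xm \<rho> \<bullet> e1) * \<kappa> \<rho>) \<bullet> (dt * \<kappa> \<rho> * norm (dr Xm \<rho>)) = dt * (((Xm \<rho> \<bullet> e1) * (\<kappa> \<rho>)\<^sup>2) \<bullet> norm (dr Xm \<rho>))"
        by (simp add: power2_eq_square)
    qed
    ultimately have TS: "T = dt * S" using e1' by simp
    have e2': "T + L2ip (\<lambda>\<rho>. dX \<rho> \<bullet> e1) (\<lambda>\<rho>. norm (dr (\<lambda>\<rho>. Xm \<rho> + dX \<rho>) \<rho>))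
     + L2ip (\<lambda>\<rho>. (Xm \<rho> \<bullet> e1) *\<^sub>R dr (\<lambda>\<rho>. Xm \<rho> + dX \<rho>) \<rho>) (\<lambda>\<rho>. inverse (norm (dr Xm \<rho>)) *\<^sub>R dr dX \<rho>)
     = Bm per bc rho Xm (\<lambda>\<rho>. Xm \<rho> + dX \<rho>) dX"
      using bspec[OF eq2 dX] unfolding T_def X1 .
    have "Energy per bc rho (\<lambda>\<rho>. Xm \<rho> + dX \<rho>) + 2 * pi * T \<le> Energy per bc rho Xm"
      by (rule core[OF J Xm A dX e2'])
    thus "Energy per bc rho Xm1 + 2 * pi * dt * sip lumped J (\<lambda>\<rho>. (Xm \<rho> \<bullet> e1) * (\<kappa> \<rho>)\<^sup>2) (\<lambda>\<rho>. norm (dr Xm \<rho>))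
      \<le> Energy per bc rho Xm" unfolding X1 TS S_def by (simp add: mult.assoc)
  }
  {
    fix dX :: "real \<Rightarrow> real \<times> real" and \<kappa> :: "real \<Rightarrow> real \<times> real" and Xm1
    assume dX: "dX \<in> VVhd J per bc" and k: "\<kappa> \<in> W2 (Wsh lumped J per bc)" and X1: "Xm1 = (\<lambda>\<rho>. Xm \<rho> + dX \<rho>)"
      and eq1: "\<forall>ch\<in>W2 (Wsh lumped J per bc).
         sip lumped J (\<lambda>\<rho>. (Xm \<rho> \<bullet> e1) *\<^sub>R ((1 / dt) *\<^sub>R (Xm1 \<rho> - Xm \<rho>)))
                      (\<lambda>\<rho>. norm (dr Xm \<rho>) *\<^sub>R ch \<rho>)
       = sip lumped J (\<lambda>\<rho>. (Xm \<rho> \<bullet> e1) *\<^sub>R \<kappa> \<rho>) (\<lambda>\<rho>. norm (dr Xm \<rho>) *\<^sub>R ch \<rho>)"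
      and eq2: "\<forall>\<eta>\<in>VVhd J per bc.
         sip lumped J (\<lambda>\<rho>. (Xm \<rho> \<bullet> e1) *\<^sub>R \<kappa> \<rho>) (\<lambda>\<rho>. norm (dr Xm \<rho>) *\<^sub>R \<eta> \<rho>)
       + L2ip (\<lambda>\<rho>. \<eta> \<rho> \<bullet> e1) (\<lambda>\<rho>. norm (dr Xm1 \<rho>))
       + L2ip (\<lambda>\<rho>. (Xm \<rho> \<bullet> e1) *\<^sub>R dr Xm1 \<rho>) (\<lambda>\<rho>. inverse (norm (dr Xm \<rho>)) *\<^sub>R dr \<eta> \<rho>)
       = Bm per bc rho Xm Xm1 \<eta>"
    have kd: "(\<lambda>\<rho>. dt *\<^sub>R \<kappa> \<rho>) \<in> W2 (Wsh lumped J per bc)" by (rule W2_scale[OF k])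
    have e1': "sip lumped J (\<lambda>\<rho>. (Xm \<rho> \<bullet> e1) *\<^sub>R ((1 / dt) *\<^sub>R (Xm1 \<rho> - Xm \<rho>)))
                      (\<lambda>\<rho>. norm (dr Xm \<rho>) *\<^sub>R (dt *\<^sub>R \<kappa> \<rho>))
       = sip lumped J (\<lambda>\<rho>. (Xm \<rho> \<bullet> e1) *\<^sub>R \<kappa> \<rho>) (\<lambda>\<rho>. norm (dr Xm \<rho>) *\<^sub>R (dt *\<^sub>R \<kappa> \<rho>))"
      using bspec[OF eq1 kd] by simp
    define T where "T = sip lumped J (\<lambda>\<rho>. (Xm \<rho> \<bullet> e1) *\<^sub>R \<kappa> \<rho>) (\<lambda>\<rho>. norm (dr Xm \<rho>) *\<^sub>R dX \<rho>)"
    define S where "S = sip lumped J (\<lambda>\<rho>. (Xm \<rho> \<bullet> e1) * (norm (\<kappa> \<rho>))\<^sup>2) (\<lambda>\<rho>. norm (dr Xm \<rho>))"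
    have "sip lumped J (\<lambda>\<rho>. (Xm \<rho> \<bullet> e1) *\<^sub>R ((1 / dt) *\<^sub>R (Xm1 \<rho> - Xm \<rho>)))
                      (\<lambda>\<rho>. norm (dr Xm \<rho>) *\<^sub>R (dt *\<^sub>R \<kappa> \<rho>)) = T"
      unfolding T_def X1 by (rule sip_cong) (use dt in \<open>simp add: inner_commute\<close>)
    moreover have "sip lumped J (\<lambda>\<rho>. (Xm \<rho> \<bullet> e1) *\<^sub>R \<kappa> \<rho>) (\<lambda>\<rho>. norm (dr Xm \<rho>) *\<^sub>R (dt *\<^sub>R \<kappa> \<rho>)) = dt * S"
      unfolding S_def
    proof (rule sip_scale[OF J])
      have ck: "pc J \<kappa>" by (rule pc_W2[OF k J])
      show "pc J (\<lambda>\<rho>. ((Xm \<rho> \<bullet> e1) * (norm (\<kappa> \<rho>))\<^sup>2) \<bullet> norm (dr Xm \<rho>))"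
        by (intro pc_inner pc_mult pc_power pc_norm cXe1 cn ck)
      fix \<rho> show "((Xm \<rho> \<bullet> e1) *\<^sub>R \<kappa> \<rho>) \<bullet> (norm (dr Xm \<rho>) *\<^sub>R (dt *\<^sub>R \<kappa> \<rho>)) = dt * (((Xm \<rho> \<bullet> e1) * (norm (\<kappa> \<rho>))\<^sup>2) \<bullet> norm (dr Xm \<rho>))"
        by (simp add: power2_norm_eq_inner)
    qed
    ultimately have TS: "T = dt * S" using e1' by simp
    have e2': "T + L2ip (\<lambda>\<rho>. dX \<rho> \<bullet> e1) (\<lambda>\<rho>. norm (dr (\<lambda>\<rho>. Xm \<rho> + dX \<rho>) \<rho>))
     + L2ip (\<lambda>\<rho>. (Xm \<rho> \<bullet> e1) *\<^sub>R dr (\<lambda>\<rho>. Xm \<rho> + dX \<rho>) \<rho>) (\<lambda>\<rho>. inverse (norm (dr Xm \<rho>)) *\<^sub>R dr dX \<rho>)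
     = Bm per bc rho Xm (\<lambda>\<rho>. Xm \<rho> + dX \<rho>) dX"
      using bspec[OF eq2 dX] unfolding T_def X1 .
    have "Energy per bc rho (\<lambda>\<rho>. Xm \<rho> + dX \<rho>) + 2 * pi * T \<le> Energy per bc rho Xm"
      by (rule core[OF J Xm A dX e2'])
    thus "Energy per bc rho Xm1 + 2 * pi * dt * sip lumped J (\<lambda>\<rho>. (Xm \<rho> \<bullet> e1) * (norm (\<kappa> \<rho>))\<^sup>2) (\<lambda>\<rho>. norm (dr Xm \<rho>))
      \<le> Energy per bc rho Xm" unfolding X1 TS S_def by (simp add: mult.assoc)
  }
qed

end
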